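(* Let $u\in R^{\times}$, $a\in R$. For every right $H_N^q$-comodule algebra map $f:T\to\mathcal{B}_{(u,a)}$ there exist unique $\lambda,\mu,\xi\in R$ such that $f(E)=\lambda$, $f(G)=\mu v_g$ and $f(X)=\lambda v_x+\xi v_g$.
   Context: $R$ is a commutative unital ring, $N\ge2$, and $q\in R$ a root of the $N$-th cyclotomic polynomial over $\mathbb{Z}$. $H_N^q$ is the Taft Hopf algebra over $R$: generated by $g,x$ with $g^N=1$, $x^N=0$, $xg=qgx$, $\Delta(g)=g\otimes g$, $\Delta(x)=1\otimes x+x\otimes g$, $\varepsilon(g)=1$, $\varepsilon(x)=0$; it is free over $R$ with basis $\{g^mx^n:0\le m,n<N\}$. For $u\in R^{\times}$, $a\in R$, $\mathcal{B}_{(u,a)}$ is the $R$-algebra generated by $v_g,v_x$ with $v_g^N=u$, $v_x^N=a$, $v_xv_g=qv_gv_x$, free over $R$ with basis $\{v_g^mv_x^n:0\le m,n<N\}$, and a right $H_N^q$-comodule algebra via $\rho(v_g)=v_g\otimes g$, $\rho(v_x)=1\otimes x+v_x\otimes g$. For each $i\ge1$ let $Z_i^H=\{Z_i^h:h\in H_N^q\}$ be a copy of the $R$-module $H_N^q$ and $T=T(\bigoplus_{i\ge1}Z_i^H)$ the tensor algebra, a right $H_N^q$-comodule algebra via $\delta(Z_i^h)=\sum Z_i^{h_1}\otimes h_2$. Set $E=Z_1^1$, $G=Z_1^g$, $X=Z_1^x$, so $\delta(E)=E\otimes1$, $\delta(G)=G\otimes g$, $\delta(X)=E\otimes x+X\otimes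 g$. *)

theory Defs
  imports Complex_Main "HOL-Computational_Algebra.Polynomial" "HOL-Library.Function_Algebras"
begin

definition cyclotomic_poly :: "nat \<Rightarrow> int poly" where
  "cyclotomic_poly N = (THE p. map_poly of_int p =
      (\<Prod>k\<in>{k. k < N \<and> coprime k N}. [:- cis (2 * pi * real k / real N), 1:]))"

(* Free R-modules are modelled as functions "basis \<Rightarrow> R" (coefficient functions). *)
definition supp :: "('b \<Rightarrow> 'a::zero) \<Rightarrow> 'b set" where
  "supp x = {v. x v \<noteq> 0}"

definition ind :: "'b \<Rightarrow> 'b \<Rightarrow> 'a::{zero,one}" where
  "ind w = (\<lambda>v. if v = w then 1 else 0)"

definition sc :: "'a::times \<Rightarrow> ('b \<Rightarrow> 'a) \<Rightarrow> 'b \<Rightarrow> 'a" where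
  "sc c x = (\<lambda>v. c * x v)"

(* elementary tensor s \<otimes> t of free modules, basis = pairs of basis elements *)
definition tens :: "('b \<Rightarrow> 'a::times) \<Rightarrow> ('c \<Rightarrow> 'a) \<Rightarrow> ('b \<times> 'c \<Rightarrow> 'a)" where
  "tens s t = (\<lambda>(v, w). s v * t w)"

definition box :: "nat \<Rightarrow> (nat \<times> nat) set" where
  "box N = {..<N} \<times> {..<N}"

(* The algebra B_(u,a): basis v_g^m v_x^n, (m,n) in box N.
   bmon N u a (m,n) is the element v_g^m v_x^n for arbitrary m, n
   (using v_g^N = u, v_x^N = a). *)
definition bmon :: "nat \<Rightarrow> 'a::comm_ring_1 \<Rightarrow> 'a \<Rightarrow> nat \<times> nat \<Rightarrow> (nat \<times> nat \<Rightarrow> 'a)" where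
  "bmon N u a p = sc (u ^ (fst p div N) * a ^ (snd p div N)) (ind (fst p mod N, snd p mod N))"

(* (v_g^m1 v_x^n1)(v_g^m2 v_x^n2) = q^(n1 m2) v_g^(m1+m2) v_x^(n1+n2) *)
definition Bmul :: "nat \<Rightarrow> 'a::comm_ring_1 \<Rightarrow> 'a \<Rightarrow> 'a \<Rightarrow>
    (nat \<times> nat \<Rightarrow> 'a) \<Rightarrow> (nat \<times> nat \<Rightarrow> 'a) \<Rightarrow> (nat \<times> nat \<Rightarrow> 'a)" where
  "Bmul N q u a x y = (\<Sum>p1\<in>supp x. \<Sum>p2\<in>supp y.
      sc (x p1 * y p2 * q ^ (snd p1 * fst p2)) (bmon N u a (fst p1 + fst p2, snd p1 + snd p2)))"

definition Bone :: "nat \<times> nat \<Rightarrow> 'a::comm_ring_1" where "Bone = ind (0, 0)"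
definition Bvg :: "nat \<times> nat \<Rightarrow> 'a::comm_ring_1" where "Bvg = ind (1, 0)"
definition Bvx :: "nat \<times> nat \<Rightarrow> 'a::comm_ring_1" where "Bvx = ind (0, 1)"

definition carrB :: "nat \<Rightarrow> (nat \<times> nat \<Rightarrow> 'a::zero) set" where
  "carrB N = {x. supp x \<subseteq> box N}"

(* The Taft algebra H_N^q = B_(1,0) as an algebra (basis g^m x^n); Bone = 1, Bvg = g, Bvx = x. *)
definition Hmul :: "nat \<Rightarrow> 'a::comm_ring_1 \<Rightarrow>
    (nat \<times> nat \<Rightarrow> 'a) \<Rightarrow> (nat \<times> nat \<Rightarrow> 'a) \<Rightarrow> (nat \<times> nat \<Rightarrow> 'a)" where
  "Hmul N q = Bmul N q 1 0"

definition BHmul :: "nat \<Rightarrow> 'a::comm_ring_1 \<Rightarrow> 'a \<Rightarrow> 'a \<Rightarrow>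
    ((nat \<times> nat) \<times> (nat \<times> nat) \<Rightarrow> 'a) \<Rightarrow> ((nat \<times> nat) \<times> (nat \<times> nat) \<Rightarrow> 'a) \<Rightarrow>
    ((nat \<times> nat) \<times> (nat \<times> nat) \<Rightarrow> 'a)" where
  "BHmul N q u a z z' = (\<Sum>pr1\<in>supp z. \<Sum>pr2\<in>supp z'.
      sc (z pr1 * z' pr2) (tens (Bmul N q u a (ind (fst pr1)) (ind (fst pr2)))
                                (Hmul N q (ind (snd pr1)) (ind (snd pr2)))))"

definition BHone :: "(nat \<times> nat) \<times> (nat \<times> nat) \<Rightarrow> 'a::comm_ring_1" where
  "BHone = tens Bone Bone"

definition pw :: "('b \<Rightarrow> 'b \<Rightarrow> 'b) \<Rightarrow> 'b \<Rightarrow> 'b \<Rightarrow> nat \<Rightarrow> 'b" where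
  "pw mul one z k = ((\<lambda>y. mul y z) ^^ k) one"

definition rho_basis :: "nat \<Rightarrow> 'a::comm_ring_1 \<Rightarrow> 'a \<Rightarrow> 'a \<Rightarrow> nat \<times> nat \<Rightarrow>
    ((nat \<times> nat) \<times> (nat \<times> nat) \<Rightarrow> 'a)" where
  "rho_basis N q u a p = BHmul N q u a
      (pw (BHmul N q u a) BHone (tens Bvg Bvg) (fst p))
      (pw (BHmul N q u a) BHone (tens Bone Bvx + tens Bvx Bvg) (snd p))"

definition rho :: "nat \<Rightarrow> 'a::comm_ring_1 \<Rightarrow> 'a \<Rightarrow> 'a \<Rightarrow> (nat \<times> nat \<Rightarrow> 'a) \<Rightarrow>
    ((nat \<times> nat) \<times> (nat \<times> nat) \<Rightarrow> 'a)" where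
  "rho N q u a x = (\<Sum>p\<in>supp x. sc (x p) (rho_basis N q u a p))"

(* comultiplication of H: Delta(g) = g \<otimes> g, Delta(x) = 1 \<otimes> x + x \<otimes> g *)
definition Delta :: "nat \<Rightarrow> 'a::comm_ring_1 \<Rightarrow> (nat \<times> nat \<Rightarrow> 'a) \<Rightarrow>
    ((nat \<times> nat) \<times> (nat \<times> nat) \<Rightarrow> 'a)" where
  "Delta N q = rho N q 1 0"

(* The tensor algebra T = T(\<oplus>_{i\<ge>1} Z_i^H): free algebra on the letters (i,(m,n)),
   the letter (i,(m,n)) standing for Z_i^{g^m x^n}; basis = words. *)
type_synonym letter = "nat \<times> (nat \<times> nat)"

definition carrT :: "nat \<Rightarrow> (letter list \<Rightarrow> 'a::zero) set" where
  "carrT N = {x. finite (supp x) \<and>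
      (\<forall>w\<in>supp x. \<forall>l\<in>set w. 1 \<le> fst l \<and> snd l \<in> box N)}"

definition Tmul :: "(letter list \<Rightarrow> 'a::comm_ring_1) \<Rightarrow> (letter list \<Rightarrow> 'a) \<Rightarrow> (letter list \<Rightarrow> 'a)" where
  "Tmul x y = (\<Sum>w1\<in>supp x. \<Sum>w2\<in>supp y. sc (x w1 * y w2) (ind (w1 @ w2)))"

definition Tone :: "letter list \<Rightarrow> 'a::comm_ring_1" where
  "Tone = ind []"

definition Z :: "nat \<Rightarrow> nat \<Rightarrow> (nat \<times> nat \<Rightarrow> 'a::comm_ring_1) \<Rightarrow> (letter list \<Rightarrow> 'a)" where
  "Z N i h = (\<Sum>p\<in>box N. sc (h p) (ind [(i, p)]))"

definition THmul :: "nat \<Rightarrow> 'a::comm_ring_1 \<Rightarrow>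
    (letter list \<times> (nat \<times> nat) \<Rightarrow> 'a) \<Rightarrow> (letter list \<times> (nat \<times> nat) \<Rightarrow> 'a) \<Rightarrow>
    (letter list \<times> (nat \<times> nat) \<Rightarrow> 'a)" where
  "THmul N q z z' = (\<Sum>wr1\<in>supp z. \<Sum>wr2\<in>supp z'.
      sc (z wr1 * z' wr2) (tens (ind (fst wr1 @ fst wr2)) (Hmul N q (ind (snd wr1)) (ind (snd wr2)))))"

definition THone :: "letter list \<times> (nat \<times> nat) \<Rightarrow> 'a::comm_ring_1" where
  "THone = tens Tone Bone"

definition delta_letter :: "nat \<Rightarrow> 'a::comm_ring_1 \<Rightarrow> letter \<Rightarrow> (letter list \<times> (nat \<times> nat) \<Rightarrow> 'a)" where
  "delta_letter N q l = (\<Sum>rs\<in>supp (Delta N q (ind (snd l))).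
      sc (Delta N q (ind (snd l)) rs) (tens (ind [(fst l, fst rs)]) (ind (snd rs))))"

definition delta_word :: "nat \<Rightarrow> 'a::comm_ring_1 \<Rightarrow> letter list \<Rightarrow> (letter list \<times> (nat \<times> nat) \<Rightarrow> 'a)" where
  "delta_word N q w = foldr (\<lambda>l acc. THmul N q (delta_letter N q l) acc) w THone"

definition delta :: "nat \<Rightarrow> 'a::comm_ring_1 \<Rightarrow> (letter list \<Rightarrow> 'a) \<Rightarrow> (letter list \<times> (nat \<times> nat) \<Rightarrow> 'a)" where
  "delta N q x = (\<Sum>w\<in>supp x. sc (x w) (delta_word N q w))"

definition ftens :: "((letter list \<Rightarrow> 'a::comm_ring_1) \<Rightarrow> (nat \<times> nat \<Rightarrow> 'a)) \<Rightarrow>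
    (letter list \<times> (nat \<times> nat) \<Rightarrow> 'a) \<Rightarrow> ((nat \<times> nat) \<times> (nat \<times> nat) \<Rightarrow> 'a)" where
  "ftens f z = (\<Sum>wr\<in>supp z. sc (z wr) (tens (f (ind (fst wr))) (ind (snd wr))))"

definition comod_alg_map :: "nat \<Rightarrow> 'a::comm_ring_1 \<Rightarrow> 'a \<Rightarrow> 'a \<Rightarrow>
    ((letter list \<Rightarrow> 'a) \<Rightarrow> (nat \<times> nat \<Rightarrow> 'a)) \<Rightarrow> bool" where
  "comod_alg_map N q u a f \<longleftrightarrow>
     (\<forall>x\<in>carrT N. f x \<in> carrB N) \<and>
     (\<forall>x\<in>carrT N. \<forall>y\<in>carrT N. f (x + y) = f x + f y) \<and>
     (\<forall>c. \<forall>x\<in>carrT N. f (sc c x) = sc c (f x)) \<and>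
     f Tone = Bone \<and>
     (\<forall>x\<in>carrT N. \<forall>y\<in>carrT N. f (Tmul x y) = Bmul N q u a (f x) (f y)) \<and>
     (\<forall>x\<in>carrT N. rho N q u a (f x) = ftens f (delta N q x))"

end

theory Submission
  imports Defs
begin


lemma sum_app: "(\<Sum>x\<in>A. F x) v = (\<Sum>x\<in>A. F x v)"
  by (induction A rule: infinite_finite_induct) auto

lemma sc_apply[simp]: "sc c x v = c * x v" by (simp add: sc_def)
lemma tens_apply[simp]: "tens s t (v,w) = s v * t w" by (simp add: tens_def)
lemma tens_apply': "tens s t P = s (fst P) * t (snd P)" by (cases P) (simp add: tens_def)
lemma ind_apply: "ind w v = (if v = w then 1 else 0)" by (simp add: ind_def)
lemma ind_same[simp]: "ind w w = 1" by (simp add: ind_def)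
lemma ind_diff[simp]: "v \<noteq> w \<Longrightarrow> ind w v = 0" by (simp add: ind_def)
lemma supp_ind: "supp (ind w) \<subseteq> {w}" by (auto simp: supp_def ind_def)
lemma notin_supp: "x \<notin> supp z \<Longrightarrow> z x = 0" by (simp add: supp_def)

lemma sum_supp_sup:
  assumes "supp z \<subseteq> S" "finite S" "\<And>x. z x = 0 \<Longrightarrow> F x = 0"
  shows "(\<Sum>x\<in>supp z. F x) = (\<Sum>x\<in>S. F x)"
  by (rule sum.mono_neutral_left) (use assms in \<open>auto simp: supp_def\<close>)

lemma Bmul_ind:
  "Bmul N q u a (ind p1) (ind p2) v = q ^ (snd p1 * fst p2) * (u ^ ((fst p1 + fst p2) div N) *
     a ^ ((snd p1 + snd p2) div N)) *
     (if v = ((fst p1 + fst p2) mod N, (snd p1 + snd p2) mod N) then 1 else 0)"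
proof -
  have "Bmul N q u a (ind p1) (ind p2) v = (\<Sum>x\<in>{p1}. \<Sum>y\<in>{p2}.
      ind p1 x * ind p2 y * q ^ (snd x * fst y) * bmon N u a (fst x + fst y, snd x + snd y) v)"
    unfolding Bmul_def sum_app sc_apply
    apply (subst sum_supp_sup[OF supp_ind], simp, simp)+
    apply simp
    done
  then show ?thesis by (simp add: ind_def bmon_def)
qed

lemma Bmul_out: "0 < N \<Longrightarrow> v \<notin> box N \<Longrightarrow> Bmul N q u a x y v = 0"
  unfolding Bmul_def sum_app
  by (intro sum.neutral ballI) (auto simp: bmon_def ind_def box_def)

lemma BHmul_pt:
  assumes "supp z \<subseteq> S" "finite S" "supp z' \<subseteq> S'" "finite S'"
  shows "BHmul N q u a z z' P = (\<Sum>pr1\<in>S. \<Sum>pr2\<in>S'. z pr1 * z' pr2 *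
     Bmul N q u a (ind (fst pr1)) (ind (fst pr2)) (fst P) * Hmul N q (ind (snd pr1)) (ind (snd pr2)) (snd P))"
  unfolding BHmul_def sum_app sc_apply tens_apply'
  apply (subst sum_supp_sup[OF assms(1,2)], simp)
  apply (rule sum.cong, simp)
  apply (subst sum_supp_sup[OF assms(3,4)], simp)
  apply (simp add: mult.assoc)
  done

lemma BHmul_out: "0 < N \<Longrightarrow> P \<notin> box N \<times> box N \<Longrightarrow> BHmul N q u a z z' P = 0"
  unfolding BHmul_def sum_app
  by (intro sum.neutral ballI) (auto simp: tens_apply' Hmul_def Bmul_out mem_Times_iff)

lemma Hmul_ind:
  "Hmul N q (ind p1) (ind p2) v = q ^ (snd p1 * fst p2) * (0::'a::comm_ring_1) ^ ((snd p1 + snd p2) div N) *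
     (if v = ((fst p1 + fst p2) mod N, (snd p1 + snd p2) mod N) then 1 else 0)"
  by (simp add: Hmul_def Bmul_ind)

lemma finite_box[simp]: "finite (box N)" by (simp add: box_def)

lemma supp_tens_ind: "supp (tens (ind b) (ind h) :: _ \<Rightarrow> 'a::comm_ring_1) \<subseteq> {(b,h)}"
  by (auto simp: supp_def tens_apply' ind_def)

lemma Bmul_0l: "b \<in> box N \<Longrightarrow> Bmul N q u a (ind (0,0)) (ind b) v = (if v = b then 1 else 0)"
  by (cases b) (simp add: Bmul_ind box_def)
lemma Bmul_0r: "b \<in> box N \<Longrightarrow> Bmul N q u a (ind b) (ind (0,0)) v = (if v = b then 1 else 0)"
  by (cases b) (simp add: Bmul_ind box_def)
lemma Hmul_0l: "b \<in> box N \<Longrightarrow> Hmul N q (ind (0,0)) (ind b) v = (if v = b then 1 else 0)"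
  by (simp add: Hmul_def Bmul_0l)
lemma Hmul_0r: "b \<in> box N \<Longrightarrow> Hmul N q (ind b) (ind (0,0)) v = (if v = b then 1 else 0)"
  by (simp add: Hmul_def Bmul_0r)

lemma sum_delta_box:
  fixes z :: "'b \<Rightarrow> 'a::comm_ring_1"
  assumes "supp z \<subseteq> S" "finite S"
  shows "(\<Sum>x\<in>S. z x * (if P = x then 1 else 0)) = z P"
proof -
  have "(\<Sum>x\<in>S. z x * (if P = x then 1 else 0)) = (\<Sum>x\<in>S. if P = x then z P else 0)"
    by (rule sum.cong) auto
  also have "\<dots> = (if P \<in> S then z P else 0)" using assms(2) by (simp add: sum.delta)
  also have "\<dots> = z P" using assms(1) by (auto simp: supp_def)
  finally show ?thesis .
qed

lemma BHone_left:
  assumes "supp z \<subseteq> box N \<times> box N" "0 < N"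
  shows "BHmul N q u a BHone z = z"
proof
  fix P :: "(nat \<times> nat) \<times> (nat \<times> nat)"
  have "BHmul N q u a BHone z P = (\<Sum>pr2\<in>box N \<times> box N. z pr2 * (if P = pr2 then 1 else 0))"
    unfolding BHone_def Bone_def
    apply (subst BHmul_pt[OF supp_tens_ind _ assms(1)], simp, simp)
    apply simp
    apply (rule sum.cong, simp)
    apply (clarsimp simp: Bmul_0l Hmul_0l mem_Times_iff)
    apply (auto simp: prod_eq_iff)
    done
  then show "BHmul N q u a BHone z P = z P" using sum_delta_box[OF assms(1)] by simp
qed

lemma BHone_right:
  assumes "supp z \<subseteq> box N \<times> box N" "0 < N"
  shows "BHmul N q u a z BHone = z"
proof
  fix P :: "(nat \<times> nat) \<times> (nat \<times> nat)"
  have "BHmul N q u a z BHone P = (\<Sum>pr2\<in>box N \<times> box N. z pr2 * (if P = pr2 then 1 else 0))"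
    unfolding BHone_def Bone_def
    apply (subst BHmul_pt[OF assms(1) _ supp_tens_ind], simp, simp)
    apply simp
    apply (rule sum.cong, simp)
    apply (clarsimp simp: Bmul_0r Hmul_0r mem_Times_iff)
    apply (auto simp: prod_eq_iff)
    done
  then show "BHmul N q u a z BHone P = z P" using sum_delta_box[OF assms(1)] by simp
qed

lemma pw_0: "pw mul one z 0 = one" by (simp add: pw_def)
lemma pw_Suc: "pw mul one z (Suc k) = mul (pw mul one z k) z" by (simp add: pw_def)

lemma H01: "(s1,t1) \<in> box N \<Longrightarrow> Hmul N q (ind (s1,t1)) (ind (0,1)) v =
   (if v = (s1, t1+1) \<and> t1 + 1 < N then 1 else 0)"
proof -
  assume h: "(s1,t1) \<in> box N"
  show ?thesis
  proof (cases "t1 + 1 < N")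
    case True then show ?thesis using h by (simp add: Hmul_ind box_def)
  next
    case False then have "t1 + 1 = N" using h by (simp add: box_def)
    then show ?thesis using h by (simp add: Hmul_ind box_def)
  qed
qed

lemma H10: "(s1,t1) \<in> box N \<Longrightarrow> Hmul N q (ind (s1,t1)) (ind (1,0)) v =
   q ^ t1 * (if v = ((s1 + 1) mod N, t1) then 1 else 0)"
  by (simp add: Hmul_ind box_def)

lemmas H01s = H01[unfolded One_nat_def]
lemmas H10s = H10[unfolded One_nat_def]

lemma Hm0: "(s2,t2) \<in> box N \<Longrightarrow> Hmul N q (ind (m,0)) (ind (s2,t2)) v =
   (if v = ((m + s2) mod N, t2) then 1 else 0)"
  by (simp add: Hmul_ind box_def)

lemma pw_G:
  assumes "m < N"
  shows "pw (BHmul N q u a) BHone (tens Bvg Bvg) m = tens (ind (m,0)) (ind (m,0))"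
  using assms
proof (induction m)
  case 0 then show ?case unfolding pw_0 BHone_def Bone_def by (auto simp: fun_eq_iff tens_apply')
next
  case (Suc m)
  show ?case
  proof
    fix P :: "(nat \<times> nat) \<times> (nat \<times> nat)"
    have "pw (BHmul N q u a) BHone (tens Bvg Bvg) (Suc m) P =
      BHmul N q u a (tens (ind (m,0)) (ind (m,0))) (tens (ind (1,0)) (ind (1,0))) P"
      using Suc by (simp add: pw_Suc Bvg_def)
    also have "\<dots> = Bmul N q u a (ind (m,0)) (ind (1,0)) (fst P) * Hmul N q (ind (m,0)) (ind (1,0)) (snd P)"
      by (subst BHmul_pt[OF supp_tens_ind _ supp_tens_ind]) auto
    also have "\<dots> = tens (ind (Suc m,0)) (ind (Suc m,0)) P"
      using Suc.prems by (simp add: Bmul_ind Hmul_ind tens_apply')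
    finally show "pw (BHmul N q u a) BHone (tens Bvg Bvg) (Suc m) P = tens (ind (Suc m,0)) (ind (Suc m,0)) P" .
  qed
qed

definition XX :: "(nat \<times> nat) \<times> (nat \<times> nat) \<Rightarrow> 'a::comm_ring_1" where
  "XX = tens Bone Bvx + tens Bvx Bvg"

lemma XX_apply: "XX P = (if P = ((0,0),(0,1)) then 1 else if P = ((0,1),(1,0)) then 1 else 0)"
  by (cases P) (auto simp: XX_def Bone_def Bvx_def Bvg_def ind_apply)

lemma supp_XX: "supp XX \<subseteq> {((0,0),(0,1)), ((0,1),(1,0))}"
  by (auto simp: supp_def XX_apply split: if_splits)

lemma BH_XX:
  assumes "supp W \<subseteq> box N \<times> box N"
  shows "BHmul N q u a W XX P = (\<Sum>pr1\<in>box N \<times> box N. W pr1 *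
     (Bmul N q u a (ind (fst pr1)) (ind (0,0)) (fst P) * Hmul N q (ind (snd pr1)) (ind (0,1)) (snd P) +
      Bmul N q u a (ind (fst pr1)) (ind (0,1)) (fst P) * Hmul N q (ind (snd pr1)) (ind (1,0)) (snd P)))"
  apply (subst BHmul_pt[OF assms _ supp_XX], simp, simp)
  apply (rule sum.cong, simp)
  apply (simp add: XX_apply algebra_simps)
  done

lemma pw_X:
  assumes "0 < N"
  shows "supp (pw (BHmul N q u a) BHone XX n) \<subseteq> box N \<times> box N \<and>
    (\<forall>P. n < snd (snd P) \<longrightarrow> pw (BHmul N q u a) BHone XX n P = 0) \<and>
    (n < N \<longrightarrow> (\<forall>i j s. pw (BHmul N q u a) BHone XX n ((i,j),(s,n)) =
         (if i = 0 \<and> j = 0 \<and> s = 0 then 1 else 0)))"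
proof (induction n)
  case 0
  then show ?case using assms by (auto simp: pw_0 BHone_def Bone_def supp_def box_def tens_apply' ind_apply)
next
  case (Suc n)
  let ?Z = "pw (BHmul N q u a) BHone XX n"
  have s: "supp ?Z \<subseteq> box N \<times> box N" and z0: "\<And>P. n < snd (snd P) \<Longrightarrow> ?Z P = 0"
    and zt: "n < N \<Longrightarrow> ?Z ((i,j),(s,n)) = (if i = 0 \<and> j = 0 \<and> s = 0 then 1 else 0)" for i j s
    using Suc.IH by auto
  have e: "pw (BHmul N q u a) BHone XX (Suc n) P = BHmul N q u a ?Z XX P" for P
    by (simp add: pw_Suc)
  have A: "supp (pw (BHmul N q u a) BHone XX (Suc n)) \<subseteq> box N \<times> box N"
  proof
    fix P assume "P \<in> supp (pw (BHmul N q u a) BHone XX (Suc n))"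
    then have "BHmul N q u a ?Z XX P \<noteq> 0" by (simp add: supp_def pw_Suc)
    then show "P \<in> box N \<times> box N" using BHmul_out[OF assms, of P] by blast
  qed
  have B: "pw (BHmul N q u a) BHone XX (Suc n) P = 0" if "Suc n < snd (snd P)" for P
    unfolding e BH_XX[OF s]
  proof (intro sum.neutral ballI)
    fix pr1 assume "pr1 \<in> box N \<times> box N"
    then obtain b s1 t1 where p: "pr1 = (b,(s1,t1))" "(s1,t1) \<in> box N" by (cases pr1) auto
    show "?Z pr1 * (Bmul N q u a (ind (fst pr1)) (ind (0,0)) (fst P) * Hmul N q (ind (snd pr1)) (ind (0,1)) (snd P) +
      Bmul N q u a (ind (fst pr1)) (ind (0,1)) (fst P) * Hmul N q (ind (snd pr1)) (ind (1,0)) (snd P)) = 0"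
    proof (cases "n < t1")
      case True then show ?thesis using z0[of pr1] p by simp
    next
      case False then show ?thesis using that p by (auto simp: H01 H10 H01s H10s)
    qed
  qed
  have C: "pw (BHmul N q u a) BHone XX (Suc n) ((i,j),(s,Suc n)) = (if i = 0 \<and> j = 0 \<and> s = 0 then 1 else 0)"
    if "Suc n < N" for i j s
  proof -
    have "pw (BHmul N q u a) BHone XX (Suc n) ((i,j),(s,Suc n)) =
      (\<Sum>pr1\<in>box N \<times> box N. if pr1 = ((0,0),(0,n)) then (if i = 0 \<and> j = 0 \<and> s = 0 then 1 else 0) else 0)"
      unfolding e BH_XX[OF s]
    proof (rule sum.cong[OF refl])
      fix pr1 assume "pr1 \<in> box N \<times> box N"
      then obtain b s1 t1 where p: "pr1 = (b,(s1,t1))" "b \<in> box N" "(s1,t1) \<in> box N" by (cases pr1) auto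
      show "?Z pr1 * (Bmul N q u a (ind (fst pr1)) (ind (0,0)) (fst ((i,j),(s,Suc n))) * Hmul N q (ind (snd pr1)) (ind (0,1)) (snd ((i,j),(s,Suc n))) +
        Bmul N q u a (ind (fst pr1)) (ind (0,1)) (fst ((i,j),(s,Suc n))) * Hmul N q (ind (snd pr1)) (ind (1,0)) (snd ((i,j),(s,Suc n)))) =
        (if pr1 = ((0,0),(0,n)) then (if i = 0 \<and> j = 0 \<and> s = 0 then 1 else 0) else 0)"
      proof (cases "n < t1")
        case True then show ?thesis using z0[of pr1] p by auto
      next
        case False
        then have "t1 \<le> n" by simp
        show ?thesis
        proof (cases "t1 = n")
          case True
          then show ?thesis using p that zt[of "fst b" "snd b" s1]
            by (cases b) (auto simp: H01 H10 H01s H10s Bmul_0r)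
        next
          case False
          then show ?thesis using p that \<open>t1 \<le> n\<close> by (auto simp: H01 H10 H01s H10s)
        qed
      qed
    qed
    also have "\<dots> = (if i = 0 \<and> j = 0 \<and> s = 0 then 1 else 0)"
      using that assms by (simp add: sum.delta' box_def)
    finally show ?thesis .
  qed
  show ?case using A B C by blast
qed

lemma rb_XX: "rho_basis N q u a p = BHmul N q u a (pw (BHmul N q u a) BHone (tens Bvg Bvg) (fst p))
      (pw (BHmul N q u a) BHone XX (snd p))"
  by (simp add: rho_basis_def XX_def)

lemma RB:
  assumes "0 < N" "m < N" "n < N"
  shows "(\<forall>P. n < snd (snd P) \<longrightarrow> rho_basis N q u a (m,n) P = 0) \<and>
    (\<forall>i j s. rho_basis N q u a (m,n) ((i,j),(s,n)) = (if i = m \<and> j = 0 \<and> s = m then 1 else 0))"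
proof -
  let ?W = "pw (BHmul N q u a) BHone XX n"
  have W: "supp ?W \<subseteq> box N \<times> box N" "\<And>P. n < snd (snd P) \<Longrightarrow> ?W P = 0"
    "\<And>i j s. ?W ((i,j),(s,n)) = (if i = 0 \<and> j = 0 \<and> s = 0 then 1 else 0)"
    using pw_X[OF assms(1), of q u a n] assms(3) by auto
  have e: "rho_basis N q u a (m,n) P = (\<Sum>pr2\<in>box N \<times> box N. ?W pr2 *
     (Bmul N q u a (ind (m,0)) (ind (fst pr2)) (fst P) * Hmul N q (ind (m,0)) (ind (snd pr2)) (snd P)))" for P
    unfolding rb_XX fst_conv snd_conv pw_G[OF assms(2)]
    by (subst BHmul_pt[OF supp_tens_ind _ W(1)]) (auto simp: mult.assoc)
  have B: "rho_basis N q u a (m,n) P = 0" if "n < snd (snd P)" for P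
    unfolding e
  proof (intro sum.neutral ballI)
    fix pr2 assume "pr2 \<in> box N \<times> box N"
    then obtain b s2 t2 where p: "pr2 = (b,(s2,t2))" "(s2,t2) \<in> box N" by (cases pr2) auto
    show "?W pr2 * (Bmul N q u a (ind (m,0)) (ind (fst pr2)) (fst P) * Hmul N q (ind (m,0)) (ind (snd pr2)) (snd P)) = 0"
    proof (cases "n < t2")
      case True then show ?thesis using W(2)[of pr2] p by simp
    next
      case False then show ?thesis using that p by (auto simp: Hm0)
    qed
  qed
  have A: "rho_basis N q u a (m,n) ((i,j),(s,n)) = (if i = m \<and> j = 0 \<and> s = m then 1 else 0)" for i j s
  proof -
    have "rho_basis N q u a (m,n) ((i,j),(s,n)) =
      (\<Sum>pr2\<in>box N \<times> box N. if pr2 = ((0,0),(0,n)) then (if i = m \<and> j = 0 \<and> s = m then 1 else 0) else 0)"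
      unfolding e
    proof (rule sum.cong[OF refl])
      fix pr2 assume "pr2 \<in> box N \<times> box N"
      then obtain b s2 t2 where p: "pr2 = (b,(s2,t2))" "b \<in> box N" "(s2,t2) \<in> box N" by (cases pr2) auto
      show "?W pr2 * (Bmul N q u a (ind (m,0)) (ind (fst pr2)) (fst ((i,j),(s,n))) *
          Hmul N q (ind (m,0)) (ind (snd pr2)) (snd ((i,j),(s,n)))) =
        (if pr2 = ((0,0),(0,n)) then (if i = m \<and> j = 0 \<and> s = m then 1 else 0) else 0)"
      proof (cases "t2 = n")
        case True
        then show ?thesis using p W(3)[of "fst b" "snd b" s2] assms
          by (cases b) (auto simp: Hm0 Bmul_0r box_def)
      next
        case False
        then show ?thesis using p by (auto simp: Hm0)
      qed
    qed
    also have "\<dots> = (if i = m \<and> j = 0 \<and> s = m then 1 else 0)"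
      using assms by (simp add: sum.delta' box_def)
    finally show ?thesis .
  qed
  show ?thesis using A B by blast
qed

lemma rho_pt: "y \<in> carrB N \<Longrightarrow> rho N q u a y P = (\<Sum>p\<in>box N. y p * rho_basis N q u a p P)"
  unfolding rho_def sum_app sc_apply carrB_def
  by (subst sum_supp_sup) auto

lemma key:
  fixes y :: "nat \<times> nat \<Rightarrow> 'a::comm_ring_1"
  assumes N: "0 < N" "k < N" and y: "y \<in> carrB N"
    and h: "\<And>P. (\<Sum>p\<in>box N. y p * rho_basis N q u a p P) = y (fst P) * ind (k,0) (snd P)"
  shows "y = sc (y (k,0)) (ind (k,0))"
proof -
  have ybox: "y p = 0" if "p \<notin> box N" for p
    using y that by (auto simp: carrB_def supp_def)
  have Y: "y (m,n) = 0" if "1 \<le> n" "n < N" for m n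
    using that
  proof (induction "N - n" arbitrary: n m rule: less_induct)
    case less
    let ?P = "((m,0),(m,n)) :: (nat \<times> nat) \<times> (nat \<times> nat)"
    have "(\<Sum>p\<in>box N. y p * rho_basis N q u a p ?P) = (\<Sum>p\<in>box N. if p = (m,n) then y (m,n) else 0)"
    proof (rule sum.cong[OF refl])
      fix p assume "p \<in> box N"
      then obtain m' n' where p: "p = (m',n')" "m' < N" "n' < N" by (cases p) (auto simp: box_def)
      show "y p * rho_basis N q u a p ?P = (if p = (m,n) then y (m,n) else 0)"
      proof (cases "n' < n")
        case True then show ?thesis using RB[OF N(1) p(2,3), of q u a] p by auto
      next
        case False
        show ?thesis
        proof (cases "n' = n")
          case True then show ?thesis using RB[OF N(1) p(2,3), of q u a] p by auto
        next
          case False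
          then have "n < n'" using \<open>\<not> n' < n\<close> by simp
          then have "y (m',n') = 0" using less.hyps[of n' m'] less.prems p by auto
          then show ?thesis using p \<open>n < n'\<close> by auto
        qed
      qed
    qed
    also have "\<dots> = y (m,n)"
    proof -
      have "(\<Sum>p\<in>box N. if p = (m,n) then y (m,n) else 0) = (if (m,n) \<in> box N then y (m,n) else 0)"
        by (simp add: sum.delta')
      then show ?thesis using ybox[of "(m,n)"] by auto
    qed
    finally show ?case using h[of ?P] less.prems by simp
  qed
  have Y0: "y (m,0) = 0" if "m \<noteq> k" for m
  proof -
    let ?P = "((m,0),(m,0)) :: (nat \<times> nat) \<times> (nat \<times> nat)"
    have "(\<Sum>p\<in>box N. y p * rho_basis N q u a p ?P) = (\<Sum>p\<in>box N. if p = (m,0) then y (m,0) else 0)"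
    proof (rule sum.cong[OF refl])
      fix p assume "p \<in> box N"
      then obtain m' n' where p: "p = (m',n')" "m' < N" "n' < N" by (cases p) (auto simp: box_def)
      show "y p * rho_basis N q u a p ?P = (if p = (m,0) then y (m,0) else 0)"
      proof (cases "n' = 0")
        case True then show ?thesis using RB[OF N(1) p(2,3), of q u a] p by auto
      next
        case False then show ?thesis using Y[of n' m'] p by auto
      qed
    qed
    also have "\<dots> = y (m,0)"
    proof -
      have "(\<Sum>p\<in>box N. if p = (m,0) then y (m,0) else 0) = (if (m,0) \<in> box N then y (m,0) else 0)"
        by (simp add: sum.delta')
      then show ?thesis using ybox[of "(m,0)"] by auto
    qed
    finally show ?thesis using h[of ?P] that by simp
  qed
  show ?thesis
  proof
    fix p :: "nat \<times> nat"
    obtain m n where p: "p = (m,n)" by (cases p)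
    show "y p = sc (y (k,0)) (ind (k,0)) p"
    proof (cases "p \<in> box N")
      case False
      then have "p \<noteq> (k,0)" using N by (auto simp: box_def)
      then show ?thesis using ybox[OF False] by simp
    next
      case True
      then show ?thesis using p Y Y0 by (cases "n = 0") (auto simp: box_def ind_apply)
    qed
  qed
qed



lemma sc_0: "sc (0::'a::comm_ring_1) x = 0" by (simp add: sc_def fun_eq_iff)
lemma sc_1: "sc (1::'a::comm_ring_1) x = x" by (simp add: sc_def fun_eq_iff)

lemma Z_ind: "p0 \<in> box N \<Longrightarrow> Z N i (ind p0) = ind [(i,p0)]"
proof
  fix w assume p0: "p0 \<in> box N"
  have "Z N i (ind p0) w = (\<Sum>p\<in>box N. if p = p0 then ind [(i,p0)] w else 0)"
    unfolding Z_def sum_app sc_apply by (rule sum.cong) (auto simp: ind_apply)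
  then show "Z N i (ind p0) w = ind [(i,p0)] w" using p0 by (simp add: sum.delta')
qed

lemma carrT_ind: "p \<in> box N \<Longrightarrow> (ind [(1,p)] :: letter list \<Rightarrow> 'a::comm_ring_1) \<in> carrT N"
proof -
  assume p: "p \<in> box N"
  have s: "supp (ind [(1,p)] :: letter list \<Rightarrow> 'a) \<subseteq> {[(1,p)]}" by (rule supp_ind)
  then have "finite (supp (ind [(1,p)] :: letter list \<Rightarrow> 'a))" by (rule finite_subset) simp
  moreover have "\<forall>w\<in>supp (ind [(1,p)] :: letter list \<Rightarrow> 'a). \<forall>l\<in>set w. 1 \<le> fst l \<and> snd l \<in> box N"
  proof (intro ballI)
    fix w and l :: letter assume "w \<in> supp (ind [(1,p)] :: letter list \<Rightarrow> 'a)" "l \<in> set w"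
    then have "l = (1,p)" using s by auto
    then show "1 \<le> fst l \<and> snd l \<in> box N" using p by simp
  qed
  ultimately show ?thesis unfolding carrT_def by blast
qed

lemma delta_single: "delta N q (ind [l] :: _ \<Rightarrow> 'a::comm_ring_1) = THmul N q (delta_letter N q l) THone"
  unfolding delta_def
  by (subst sum_supp_sup[OF supp_ind]) (auto simp: sc_0 sc_1 delta_word_def)

lemma THone_right:
  assumes "supp z \<subseteq> S" "finite S" "\<And>wr. wr \<in> S \<Longrightarrow> snd wr \<in> box N"
  shows "THmul N q (z :: _ \<Rightarrow> 'a::comm_ring_1) THone = z"
proof
  fix P :: "letter list \<times> (nat \<times> nat)"
  have "THmul N q z THone P = (\<Sum>wr\<in>S. z wr * (if P = wr then 1 else 0))"
    unfolding THmul_def sum_app sc_apply THone_def Tone_def Bone_def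
    apply (subst sum_supp_sup[OF assms(1,2)], simp)
    apply (rule sum.cong, simp)
    apply (subst sum_supp_sup[OF supp_tens_ind], simp, simp)
    using assms(3) apply (auto simp: tens_apply' Hmul_0r ind_apply prod_eq_iff)
    done
  then show "THmul N q z THone P = z P" using sum_delta_box[OF assms(1,2)] by simp
qed

lemma ftens_sup: "supp z \<subseteq> S \<Longrightarrow> finite S \<Longrightarrow>
  ftens f (z :: _ \<Rightarrow> 'a::comm_ring_1) = (\<Sum>wr\<in>S. sc (z wr) (tens (f (ind (fst wr))) (ind (snd wr))))"
  unfolding ftens_def by (rule sum_supp_sup) (auto simp: sc_0)

lemma Delta_ind: "Delta N q (ind p) = (rho_basis N q 1 0 p :: _ \<Rightarrow> 'a::comm_ring_1)"
  unfolding Delta_def rho_def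
  by (subst sum_supp_sup[OF supp_ind]) (auto simp: sc_0 sc_1)

lemma ftens_delta:
  fixes f :: "(letter list \<Rightarrow> 'a::comm_ring_1) \<Rightarrow> (nat \<times> nat \<Rightarrow> 'a)"
  assumes SD: "supp (Delta N q (ind p) :: _ \<Rightarrow> 'a) \<subseteq> SD" "SD \<subseteq> box N \<times> box N"
  shows "ftens f (delta N q (ind [(i,p)])) =
    (\<Sum>rs\<in>SD. sc (Delta N q (ind p) rs) (tens (f (ind [(i, fst rs)])) (ind (snd rs))))"
proof -
  let ?D = "Delta N q (ind p) :: _ \<Rightarrow> 'a"
  let ?g = "\<lambda>rs::(nat\<times>nat)\<times>(nat\<times>nat). ([(i, fst rs)], snd rs)"
  let ?L = "delta_letter N q (i,p) :: _ \<Rightarrow> 'a"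
  have fin: "finite SD" using SD(2) by (rule finite_subset) simp
  have inj: "inj_on ?g SD" by (auto simp: inj_on_def prod_eq_iff)
  have L: "?L wr = (\<Sum>rs\<in>SD. ?D rs * (if wr = ?g rs then 1 else 0))" for wr
    unfolding delta_letter_def sum_app sc_apply fst_conv snd_conv
    apply (subst sum_supp_sup[OF SD(1) fin], simp)
    apply (rule sum.cong, simp)
    apply (cases wr)
    apply (simp add: ind_apply tens_apply')
    done
  have suppL: "supp ?L \<subseteq> ?g ` SD"
  proof
    fix wr assume w: "wr \<in> supp ?L"
    show "wr \<in> ?g ` SD"
    proof (rule ccontr)
      assume "wr \<notin> ?g ` SD"
      then have "(\<Sum>rs\<in>SD. ?D rs * (if wr = ?g rs then 1 else 0)) = 0"
        by (intro sum.neutral) auto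
      then show False using w by (simp add: supp_def L)
    qed
  qed
  have Lg: "?L (?g rs) = ?D rs" if "rs \<in> SD" for rs
  proof -
    have "?L (?g rs) = (\<Sum>rs'\<in>SD. if rs' = rs then ?D rs else 0)"
      unfolding L by (rule sum.cong) (auto simp: prod_eq_iff)
    then show ?thesis using that fin by (simp add: sum.delta')
  qed
  have "delta N q (ind [(i,p)]) = ?L"
    unfolding delta_single
  proof (rule THone_right[OF suppL])
    show "finite (?g ` SD)" using fin by simp
  next
    fix wr assume "wr \<in> ?g ` SD"
    then show "snd wr \<in> box N" using SD(2) by auto
  qed
  then have "ftens f (delta N q (ind [(i,p)])) =
     (\<Sum>wr\<in>?g ` SD. sc (?L wr) (tens (f (ind (fst wr))) (ind (snd wr))))"
    using ftens_sup[OF suppL] fin by simp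
  also have "\<dots> = (\<Sum>rs\<in>SD. sc (?L (?g rs)) (tens (f (ind (fst (?g rs)))) (ind (snd (?g rs)))))"
    by (subst sum.reindex[OF inj]) (simp add: o_def)
  also have "\<dots> = (\<Sum>rs\<in>SD. sc (?D rs) (tens (f (ind [(i, fst rs)])) (ind (snd rs))))"
    by (rule sum.cong) (auto simp: Lg)
  finally show ?thesis .
qed


lemma supp_BHone: "0 < N \<Longrightarrow> supp (BHone :: _ \<Rightarrow> 'a::comm_ring_1) \<subseteq> box N \<times> box N"
proof -
  assume N: "0 < N"
  have "supp (BHone :: _ \<Rightarrow> 'a) \<subseteq> {((0,0),(0,0))}"
    unfolding BHone_def Bone_def by (rule supp_tens_ind)
  then show ?thesis using N by (auto simp: box_def)
qed

lemma rb00: "0 < N \<Longrightarrow> rho_basis N q u a (0,0) = (BHone :: _ \<Rightarrow> 'a::comm_ring_1)"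
  unfolding rb_XX fst_conv snd_conv pw_0 by (rule BHone_left[OF supp_BHone])

lemma rb10: "1 < N \<Longrightarrow> rho_basis N q u a (1,0) = (tens (ind (1,0)) (ind (1,0)) :: _ \<Rightarrow> 'a::comm_ring_1)"
proof -
  assume N: "1 < N"
  have s: "supp (tens (ind (1::nat,0::nat)) (ind (1::nat,0::nat)) :: _ \<Rightarrow> 'a) \<subseteq> box N \<times> box N"
    using supp_tens_ind[of "(1::nat,0::nat)" "(1::nat,0::nat)"] N by (auto simp: box_def)
  show ?thesis
    unfolding rb_XX fst_conv snd_conv pw_0 pw_G[OF N]
    by (rule BHone_right[OF s]) (use N in simp)
qed

lemma rb01: "1 < N \<Longrightarrow> rho_basis N q u a (0,1) = (XX :: _ \<Rightarrow> 'a::comm_ring_1)"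
proof -
  assume N: "1 < N"
  have s: "supp (XX :: _ \<Rightarrow> 'a) \<subseteq> box N \<times> box N" using supp_XX N by (fastforce simp: box_def)
  have "pw (BHmul N q u a) BHone XX 1 = (XX :: _ \<Rightarrow> 'a)"
    unfolding One_nat_def pw_Suc pw_0 by (rule BHone_left[OF s]) (use N in simp)
  then show ?thesis
    unfolding rb_XX fst_conv snd_conv pw_0
    using BHone_left[OF s, of q u a] N by simp
qed



theorem proposition2p2:
  fixes N :: nat and q u a :: "'a::comm_ring_1"
    and f :: "(letter list \<Rightarrow> 'a) \<Rightarrow> (nat \<times> nat \<Rightarrow> 'a)"
  assumes "N \<ge> 2"
    and "poly (map_poly of_int (cyclotomic_poly N)) q = 0"
    and "u dvd 1"
    and "comod_alg_map N q u a f"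
  shows "\<exists>!(lam, mu, xi). f (Z N 1 Bone) = sc lam Bone \<and> f (Z N 1 Bvg) = sc mu Bvg \<and>
           f (Z N 1 Bvx) = sc lam Bvx + sc xi Bvg"
proof -
  have N0: "0 < N" "1 < N" using assms(1) by auto
  have bx: "(0,0) \<in> box N" "(1,0) \<in> box N" "(0,1) \<in> box N" using N0 by (auto simp: box_def)
  from assms(4) have fB: "\<And>x. x \<in> carrT N \<Longrightarrow> f x \<in> carrB N"
    and fR: "\<And>x. x \<in> carrT N \<Longrightarrow> rho N q u a (f x) = ftens f (delta N q x)"
    by (auto simp: comod_alg_map_def)
  define E' where "E' = (ind [(1::nat,(0::nat,0::nat))] :: letter list \<Rightarrow> 'a)"
  define G' where "G' = (ind [(1::nat,(1::nat,0::nat))] :: letter list \<Rightarrow> 'a)"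
  define X' where "X' = (ind [(1::nat,(0::nat,1::nat))] :: letter list \<Rightarrow> 'a)"
  have ZE: "Z N 1 Bone = E'" unfolding Bone_def E'_def by (rule Z_ind[OF bx(1)])
  have ZG: "Z N 1 Bvg = G'" unfolding Bvg_def G'_def by (rule Z_ind[OF bx(2)])
  have ZX: "Z N 1 Bvx = X'" unfolding Bvx_def X'_def by (rule Z_ind[OF bx(3)])
  have cE: "E' \<in> carrT N" unfolding E'_def by (rule carrT_ind[OF bx(1)])
  have cG: "G' \<in> carrT N" unfolding G'_def by (rule carrT_ind[OF bx(2)])
  have cX: "X' \<in> carrT N" unfolding X'_def by (rule carrT_ind[OF bx(3)])
  define e where "e = f E'"
  define g where "g = f G'"
  define x where "x = f X'"
  have eB: "e \<in> carrB N" unfolding e_def by (rule fB[OF cE])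
  have gB: "g \<in> carrB N" unfolding g_def by (rule fB[OF cG])
  have xB: "x \<in> carrB N" unfolding x_def by (rule fB[OF cX])
  have D00: "Delta N q (ind (0,0)) = (BHone :: _ \<Rightarrow> 'a)" using Delta_ind rb00[OF N0(1)] by metis
  have D10: "Delta N q (ind (1,0)) = (tens (ind (1,0)) (ind (1,0)) :: _ \<Rightarrow> 'a)" using Delta_ind rb10[OF N0(2)] by metis
  have D01: "Delta N q (ind (0,1)) = (XX :: _ \<Rightarrow> 'a)" using Delta_ind rb01[OF N0(2)] by metis
  have hE: "rho N q u a e P = e (fst P) * ind (0,0) (snd P)" for P
  proof -
    have s1: "supp (Delta N q (ind (0,0)) :: _ \<Rightarrow> 'a) \<subseteq> {((0,0),(0,0))}"
      unfolding D00 BHone_def Bone_def by (rule supp_tens_ind)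
    have s2: "{((0::nat,0::nat),(0::nat,0::nat))} \<subseteq> box N \<times> box N" using bx by auto
    show ?thesis
      unfolding e_def fR[OF cE] unfolding E'_def ftens_delta[OF s1 s2] using D00
      by (simp add: BHone_def Bone_def tens_apply')
  qed
  have hG: "rho N q u a g P = g (fst P) * ind (1,0) (snd P)" for P
  proof -
    have s1: "supp (Delta N q (ind (1,0)) :: _ \<Rightarrow> 'a) \<subseteq> {((1,0),(1,0))}"
      unfolding D10 by (rule supp_tens_ind)
    have s2: "{((1::nat,0::nat),(1::nat,0::nat))} \<subseteq> box N \<times> box N" using bx by auto
    show ?thesis
      unfolding g_def fR[OF cG] unfolding G'_def ftens_delta[OF s1 s2] using D10
      by (simp add: tens_apply')
  qed
  have hX: "rho N q u a x P = e (fst P) * ind (0,1) (snd P) + x (fst P) * ind (1,0) (snd P)" for P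
  proof -
    have s1: "supp (Delta N q (ind (0,1)) :: _ \<Rightarrow> 'a) \<subseteq> {((0,0),(0,1)), ((0,1),(1,0))}"
      unfolding D01 by (rule supp_XX)
    have s2: "{((0::nat,0::nat),(0::nat,1::nat)), ((0,1),(1,0))} \<subseteq> box N \<times> box N" using bx by auto
    show ?thesis
      unfolding x_def fR[OF cX] unfolding X'_def ftens_delta[OF s1 s2] using D01
      by (simp add: tens_apply' XX_apply sum_app e_def E'_def)
  qed
  define lam where "lam = e (0,0)"
  have e_eq: "e = sc lam (ind (0,0))"
    unfolding lam_def by (rule key[OF N0(1) _ eB]) (use N0 bx hE rho_pt[OF eB] in auto)
  have g_eq: "g = sc (g (1,0)) (ind (1,0))"
    by (rule key[OF N0(1) _ gB]) (use N0 hG rho_pt[OF gB] in auto)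
  define y where "y = (\<lambda>v. x v - lam * ind (0,1) v)"
  have yB: "y \<in> carrB N"
  proof -
    have "y v = 0" if "v \<notin> box N" for v
    proof -
      have "x v = 0" using xB that by (auto simp: carrB_def supp_def)
      moreover have "v \<noteq> (0,1)" using that bx by auto
      ultimately show ?thesis by (simp add: y_def)
    qed
    then show ?thesis by (auto simp: carrB_def supp_def)
  qed
  have r01: "(\<Sum>p\<in>box N. ind (0,1) p * rho_basis N q u a p P) = XX P" for P :: "(nat \<times> nat) \<times> (nat \<times> nat)"
  proof -
    have "(\<Sum>p\<in>box N. ind (0,1) p * rho_basis N q u a p P) =
       (\<Sum>p\<in>box N. if p = (0,1) then rho_basis N q u a (0,1) P else 0)"
      by (rule sum.cong) (auto simp: ind_apply)
    also have "\<dots> = rho_basis N q u a (0,1) P" using bx by (simp add: sum.delta')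
    finally show ?thesis using rb01[OF N0(2), of q u a] by simp
  qed
  have hY: "(\<Sum>p\<in>box N. y p * rho_basis N q u a p P) = y (fst P) * ind (1,0) (snd P)" for P
  proof -
    have "(\<Sum>p\<in>box N. y p * rho_basis N q u a p P) =
       (\<Sum>p\<in>box N. x p * rho_basis N q u a p P) - lam * (\<Sum>p\<in>box N. ind (0,1) p * rho_basis N q u a p P)"
      by (simp add: y_def algebra_simps sum_subtractf sum_distrib_left)
    also have "\<dots> = rho N q u a x P - lam * XX P" using rho_pt[OF xB] r01 by simp
    also have "\<dots> = y (fst P) * ind (1,0) (snd P)"
      unfolding hX XX_def e_eq y_def
      by (simp add: tens_apply' Bone_def Bvx_def Bvg_def algebra_simps)
    finally show ?thesis .
  qed
  have y_eq: "y = sc (y (1,0)) (ind (1,0))"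
    by (rule key[OF N0(1) _ yB]) (use N0 hY in auto)
  have y10: "y (1,0) = x (1,0)" by (simp add: y_def)
  have x_eq: "x = sc lam Bvx + sc (x (1,0)) Bvg"
  proof
    fix v
    have "x v = y v + lam * ind (0,1) v" by (simp add: y_def)
    also have "\<dots> = x (1,0) * ind (1,0) v + lam * ind (0,1) v"
      by (subst y_eq) (simp add: y_def)
    finally show "x v = (sc lam Bvx + sc (x (1,0)) Bvg) v"
      by (simp add: Bvx_def Bvg_def algebra_simps)
  qed
  show ?thesis
  proof (rule ex1I[of _ "(lam, g (1,0), x (1,0))"])
    show "case (lam, g (1,0), x (1,0)) of (lam, mu, xi) \<Rightarrow>
      f (Z N 1 Bone) = sc lam Bone \<and> f (Z N 1 Bvg) = sc mu Bvg \<and> f (Z N 1 Bvx) = sc lam Bvx + sc xi Bvg"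
      using e_eq g_eq x_eq unfolding ZE ZG ZX e_def[symmetric] g_def[symmetric] x_def[symmetric]
      by (simp add: Bone_def Bvg_def)
  next
    fix t :: "'a \<times> 'a \<times> 'a"
    assume "case t of (lam, mu, xi) \<Rightarrow>
      f (Z N 1 Bone) = sc lam Bone \<and> f (Z N 1 Bvg) = sc mu Bvg \<and> f (Z N 1 Bvx) = sc lam Bvx + sc xi Bvg"
    then obtain l m xi where t: "t = (l,m,xi)" and h1: "e = sc l Bone" and h2: "g = sc m Bvg"
      and h3: "x = sc l Bvx + sc xi Bvg"
      unfolding ZE ZG ZX e_def[symmetric] g_def[symmetric] x_def[symmetric] by (cases t) auto
    have "e (0,0) = l" using h1 by (simp add: Bone_def)
    moreover have "g (1,0) = m" using h2 by (simp add: Bvg_def)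
    moreover have "x (1,0) = xi" using h3 by (simp add: Bvx_def Bvg_def)
    ultimately show "t = (lam, g (1,0), x (1,0))" using t lam_def by simp
  qed
qed

end
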